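(* Let $q\in(1,\infty)$, $a>0$, $0<s<\frac a{q-1}$, $\delta,\varrho>0$, $c_r\ge c_l>0$, $C_D>c_D>1$. Let $x\in b^s_{2,\infty}$ with $\|x\|_{b^s_{2,\infty}}\le\varrho$, let $g^\delta\in\mathbb Y$ with $\|g^\delta-Ax\|_{\mathbb Y}\le\delta$, $\alpha>0$ and $\hat x_\alpha\in R_\alpha(g^\delta)$. There is a constant $C>0$ independent of $x,\delta,\varrho$ such that whenever either $$c_l\varrho^{-\frac{qa}{s+a}}\delta^{\frac{(2-q)s+2a}{s+a}}\le\alpha\le c_r\varrho^{-\frac{qa}{s+a}}\delta^{\frac{(2-q)s+2a}{s+a}}\quad\text{or}\quad c_D\delta\le\|g^\delta-A\hat x_\alpha\|_{\mathbb Y}\le C_D\delta,$$ then $\|x-\hat x_\alpha\|_{b^0_{2,2}}\le C\varrho^{\frac a{s+a}}\delta^{\frac s{s+a}}$.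
   Context: Besov sequence spaces: $d\in\mathbb N$; $(\Lambda_j)_{j\in\mathbb N_0}$ finite sets with $2^{jd}\le|\Lambda_j|\le C_\Lambda2^{jd}$; $\Lambda:=\{(j,k):j\in\mathbb N_0,k\in\Lambda_j\}$. For $p,q\in(0,\infty]$, $s\in\mathbb R$, $b^s_{p,q}:=\{x\in\mathbb R^\Lambda:\|x\|_{b^s_{p,q}}<\infty\}$, $\|x\|^q_{b^s_{p,q}}:=\sum_{j}2^{jq(s+\frac d2-\frac dp)}(\sum_{k\in\Lambda_j}|x_{j,k}|^p)^{q/p}$ (usual modifications for $p$ or $q=\infty$). $\mathbb Y$ is a real Hilbert space and $A:b^{-a}_{2,2}\to\mathbb Y$ is bounded linear with $\frac1M\|x\|_{b^{-a}_{2,2}}\le\|Ax\|_{\mathbb Y}\le M\|x\|_{b^{-a}_{2,2}}$ for some $M\ge1$. Penalty $\mathcal R(x):=\frac1q\|x\|^q_{b^0_{2,q}}=\frac1q\sum_j(\sum_{k\in\Lambda_j}|x_{j,k}|^2)^{q/2}$ on $\mathbb X=b^0_{2,q}$; $R_\alpha(g):=\operatorname{argmin}_{x\in b^0_{2,q}}\big(\frac1{2\alpha}\|g-Ax\|_{\mathbb Y}^2+\mathcal R(x)\big)$. *)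

theory Defs
  imports "HOL-Analysis.Analysis"
begin

text \<open>Sequences indexed by \<Lambda> = {(j,k). k \<in> Lam j} are represented as functions
  x :: nat \<Rightarrow> 'k \<Rightarrow> real, required to vanish outside \<Lambda>.\<close>

definition on_Lambda :: "(nat \<Rightarrow> 'k set) \<Rightarrow> (nat \<Rightarrow> 'k \<Rightarrow> real) \<Rightarrow> bool" where
  "on_Lambda Lam x \<longleftrightarrow> (\<forall>j k. k \<notin> Lam j \<longrightarrow> x j k = 0)"

definition lp_norm :: "real \<Rightarrow> 'k set \<Rightarrow> ('k \<Rightarrow> real) \<Rightarrow> real" where
  "lp_norm p L y = (\<Sum>k\<in>L. \<bar>y k\<bar> powr p) powr (1 / p)"

definition besov_level :: "nat \<Rightarrow> (nat \<Rightarrow> 'k set) \<Rightarrow> real \<Rightarrow> real \<Rightarrow> (nat \<Rightarrow> 'k \<Rightarrow> real) \<Rightarrow> nat \<Rightarrow> real" where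
  "besov_level d Lam p s x j =
     2 powr (real j * (s + real d / 2 - real d / p)) * lp_norm p (Lam j) (x j)"

definition in_besov :: "nat \<Rightarrow> (nat \<Rightarrow> 'k set) \<Rightarrow> real \<Rightarrow> real \<Rightarrow> real \<Rightarrow> (nat \<Rightarrow> 'k \<Rightarrow> real) \<Rightarrow> bool" where
  "in_besov d Lam p q s x \<longleftrightarrow> summable (\<lambda>j. besov_level d Lam p s x j powr q)"

definition besov_norm :: "nat \<Rightarrow> (nat \<Rightarrow> 'k set) \<Rightarrow> real \<Rightarrow> real \<Rightarrow> real \<Rightarrow> (nat \<Rightarrow> 'k \<Rightarrow> real) \<Rightarrow> real" where
  "besov_norm d Lam p q s x = (\<Sum>j. besov_level d Lam p s x j powr q) powr (1 / q)"

definition in_besov_inf :: "nat \<Rightarrow> (nat \<Rightarrow> 'k set) \<Rightarrow> real \<Rightarrow> real \<Rightarrow> (nat \<Rightarrow> 'k \<Rightarrow> real) \<Rightarrow> bool" where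
  "in_besov_inf d Lam p s x \<longleftrightarrow> bdd_above (range (besov_level d Lam p s x))"

definition besov_norm_inf :: "nat \<Rightarrow> (nat \<Rightarrow> 'k set) \<Rightarrow> real \<Rightarrow> real \<Rightarrow> (nat \<Rightarrow> 'k \<Rightarrow> real) \<Rightarrow> real" where
  "besov_norm_inf d Lam p s x = (SUP j. besov_level d Lam p s x j)"

definition penalty :: "nat \<Rightarrow> (nat \<Rightarrow> 'k set) \<Rightarrow> real \<Rightarrow> (nat \<Rightarrow> 'k \<Rightarrow> real) \<Rightarrow> real" where
  "penalty d Lam q x = (1 / q) * besov_norm d Lam 2 q 0 x powr q"

definition tikhonov :: "nat \<Rightarrow> (nat \<Rightarrow> 'k set) \<Rightarrow> real \<Rightarrow> ((nat \<Rightarrow> 'k \<Rightarrow> real) \<Rightarrow> 'y::real_normed_vector)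
    \<Rightarrow> real \<Rightarrow> 'y \<Rightarrow> (nat \<Rightarrow> 'k \<Rightarrow> real) \<Rightarrow> real" where
  "tikhonov d Lam q A \<alpha> g x = (1 / (2 * \<alpha>)) * (norm (g - A x))\<^sup>2 + penalty d Lam q x"

definition R_alpha :: "nat \<Rightarrow> (nat \<Rightarrow> 'k set) \<Rightarrow> real \<Rightarrow> ((nat \<Rightarrow> 'k \<Rightarrow> real) \<Rightarrow> 'y::real_normed_vector)
    \<Rightarrow> real \<Rightarrow> 'y \<Rightarrow> (nat \<Rightarrow> 'k \<Rightarrow> real) set" where
  "R_alpha d Lam q A \<alpha> g =
     {xh. on_Lambda Lam xh \<and> in_besov d Lam 2 q 0 xh \<and>
          (\<forall>z. on_Lambda Lam z \<and> in_besov d Lam 2 q 0 z \<longrightarrow>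
               tikhonov d Lam q A \<alpha> g xh \<le> tikhonov d Lam q A \<alpha> g z)}"

end

theory Submission
  imports Defs
begin

lemma pow2_eq: "(2::real) powr (real j * c) = (2 powr c) ^ j"
  by (simp add: powr_realpow[symmetric] powr_powr mult.commute)

lemma geo_sum_tail:
  fixes c :: real assumes c: "c > 0"
  shows "summable (\<lambda>j. 2 powr (- (real j * c)))"
    "(\<Sum>j. 2 powr (- (real (j + J) * c))) = 2 powr (- (real J * c)) / (1 - 2 powr (-c))"
proof -
  have "(2::real) powr (-c) < 2 powr 0" using c by (intro powr_less_mono) auto
  then have r: "norm ((2::real) powr (-c)) < 1" by simp
  have e: "\<And>j. (2::real) powr (- (real j * c)) = (2 powr (-c)) ^ j"
    using pow2_eq[of _ "-c"] by simp
  show "summable (\<lambda>j. 2 powr (- (real j * c)))" unfolding e using summable_geometric[OF r] .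
  have e2: "(2::real) powr (- (real (j + J) * c)) = 2 powr (- (real J * c)) * (2 powr (-c)) ^ j" for j
    proof -
    have "(2::real) powr (- (real (j + J) * c)) = 2 powr (- (real J * c)) * 2 powr (- (real j * c))"
      by (simp add: powr_add[symmetric] algebra_simps)
    then show ?thesis by (simp only: e)
  qed
  show "(\<Sum>j. 2 powr (- (real (j + J) * c))) = 2 powr (- (real J * c)) / (1 - 2 powr (-c))"
    unfolding e2 using suminf_mult[OF summable_geometric[OF r]] suminf_geometric[OF r] by simp
qed

lemma geo_sum_head:
  fixes c :: real assumes c: "c > 0"
  shows "(\<Sum>j<J. (2::real) powr (real j * c)) \<le> 2 powr (real J * c) / (2 powr c - 1)"
proof -
  have g: "2 powr c > (1::real)" using c by simp
  have "(\<Sum>j<J. (2::real) powr (real j * c)) = (\<Sum>j<J. (2 powr c) ^ j)" by (simp add: pow2_eq)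
  also have "\<dots> = ((2 powr c)^J - 1) / (2 powr c - 1)"
    using c by (intro geometric_sum) simp
  also have "\<dots> \<le> (2 powr c)^J / (2 powr c - 1)" using g by (simp add: divide_right_mono)
  finally show ?thesis by (simp add: pow2_eq)
qed

lemma powr_tangent:
  fixes q c x :: real assumes q: "q \<ge> 1" and c: "c > 0" and x: "x \<ge> 0"
  shows "x powr q - c powr q \<ge> q * c powr (q - 1) * (x - c)"
proof (cases "x = 0")
  case True
  have "c powr q = c powr (q-1) * c" using c by (simp add: powr_diff)
  then show ?thesis using True q c by (simp add: algebra_simps)
next
  case False
  then have xp: "x > 0" using x by simp
  have "((\<lambda>x. x powr q) has_field_derivative q * c powr (q - 1)) (at c within {0<..})"
    using has_real_derivative_powr[OF c] by (rule has_field_derivative_at_within)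
  from convex_on_imp_above_tangent[OF powr_convex[OF q] _ _ _ this] c xp
  show ?thesis by (auto simp: interior_open)
qed

lemma powr_convex0:
  fixes q a b t :: real assumes q: "q \<ge> 1" and a: "a \<ge> 0" and b: "b \<ge> 0" and t: "0 \<le> t" "t \<le> 1"
  shows "((1 - t) * a + t * b) powr q \<le> (1 - t) * a powr q + t * b powr q"
proof (cases "(1 - t) * a + t * b = 0")
  case True then show ?thesis using t by simp
next
  case False
  let ?c = "(1 - t) * a + t * b"
  have cp: "?c > 0" using False a b t by (smt (verit) mult_nonneg_nonneg)
  have 1: "a powr q - ?c powr q \<ge> q * ?c powr (q - 1) * (a - ?c)" by (rule powr_tangent[OF q cp a])
  have 2: "b powr q - ?c powr q \<ge> q * ?c powr (q - 1) * (b - ?c)" by (rule powr_tangent[OF q cp b])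
  have "(1 - t) * (a powr q - ?c powr q) + t * (b powr q - ?c powr q)
        \<ge> (1 - t) * (q * ?c powr (q - 1) * (a - ?c)) + t * (q * ?c powr (q - 1) * (b - ?c))"
    using 1 2 t by (intro add_mono mult_left_mono) auto
  moreover have "(1 - t) * (q * ?c powr (q - 1) * (a - ?c)) + t * (q * ?c powr (q - 1) * (b - ?c)) = 0"
    by (simp add: algebra_simps)
  ultimately show ?thesis by (simp add: algebra_simps)
qed

lemma powr_diff_le:
  fixes q a b :: real assumes q: "q \<ge> 1" and a: "a \<ge> 0" and b: "b \<ge> 0"
  shows "(a powr q - b powr q) / q \<le> a powr (q - 1) * \<bar>a - b\<bar>"
proof (cases "a = 0")
  case True then show ?thesis using q by simp
next
  case False
  then have ap: "a > 0" using a by simp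
  have "b powr q - a powr q \<ge> q * a powr (q - 1) * (b - a)" by (rule powr_tangent[OF q ap b])
  then have "a powr q - b powr q \<le> q * (a powr (q - 1) * (a - b))" by (simp add: algebra_simps)
  also have "\<dots> \<le> q * (a powr (q - 1) * \<bar>a - b\<bar>)" using q by (intro mult_left_mono) auto
  finally show ?thesis using q by (simp add: divide_le_eq mult.commute)
qed


lemma abs_powr_two: "\<bar>y::real\<bar> powr 2 = y\<^sup>2"
proof (cases "y = 0")
  case False
  then have "\<bar>y\<bar> powr 2 = \<bar>y\<bar> ^ 2" by (simp add: powr_realpow[symmetric])
  then show ?thesis by simp
qed simp

lemma nonneg_powr_two: "(y::real) \<ge> 0 \<Longrightarrow> y powr 2 = y\<^sup>2"
  using abs_powr_two[of y] by simp

lemma choose_J: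
  fixes \<tau> :: real assumes tp: "\<tau> > 0"
  shows "\<exists>J::nat. \<tau> \<le> 2 powr real J \<and> (J > 0 \<longrightarrow> 2 powr real J \<le> 2 * \<tau>)"
proof (cases "log 2 \<tau> \<le> 0")
  case True
  then have "\<tau> \<le> 1" using tp by (simp add: log_le_zero_cancel_iff)
  then show ?thesis by (intro exI[of _ 0]) simp
next
  case False
  define J where "J = nat \<lceil>log 2 \<tau>\<rceil>"
  have J: "real J = of_int \<lceil>log 2 \<tau>\<rceil>" using False by (simp add: J_def)
  have "\<tau> = 2 powr (log 2 \<tau>)" using tp by simp
  also have "\<dots> \<le> 2 powr real J" unfolding J by (intro powr_mono) auto
  finally have 1: "\<tau> \<le> 2 powr real J" .
  have "2 powr real J \<le> 2 powr (log 2 \<tau> + 1)" unfolding J by (intro powr_mono) linarith+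
  also have "\<dots> = 2 * \<tau>" using tp by (simp add: powr_add)
  finally show ?thesis using 1 by blast
qed

lemma split_sum_bound:
  fixes f lo hi :: "nat \<Rightarrow> real"
  assumes sf: "summable f" and sh: "summable hi"
    and le: "\<And>j. f j \<le> (if j < J then lo j else hi j)"
  shows "suminf f \<le> (\<Sum>j<J. lo j) + (\<Sum>n. hi (n + J))"
proof -
  define g where "g j = (if j < J then lo j else hi j)" for j
  have "summable (\<lambda>n. g (n + J))" unfolding g_def using sh by (simp add: summable_iff_shift)
  then have sg: "summable g" by (simp add: summable_iff_shift)
  have "suminf f \<le> suminf g" using le sf sg by (intro suminf_le) (auto simp: g_def)
  also have "\<dots> = (\<Sum>n. g (n + J)) + (\<Sum>i<J. g i)" by (rule suminf_split_initial_segment[OF sg])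
  also have "\<dots> = (\<Sum>n. hi (n + J)) + (\<Sum>i<J. lo i)" by (simp add: g_def)
  finally show ?thesis by simp
qed

lemma geo_tail:
  fixes c e :: real assumes c: "c > 0"
  shows "summable (\<lambda>j. e * 2 powr (- (real j * c)))"
    "(\<Sum>n. e * 2 powr (- (real (n + J) * c))) = e * 2 powr (- (real J * c)) / (1 - 2 powr (-c))"
proof -
  have "(2::real) powr (-c) < 2 powr 0" using c by (intro powr_less_mono) auto
  then have r: "norm ((2::real) powr (-c)) < 1" by simp
  have e: "(2::real) powr (- (real j * c)) = (2 powr (-c)) ^ j" for j
    using pow2_eq[of j "-c"] by simp
  show "summable (\<lambda>j. e * 2 powr (- (real j * c)))" unfolding e using summable_geometric[OF r] by (rule summable_mult)
  have e2: "(2::real) powr (- (real (j + J) * c)) = 2 powr (- (real J * c)) * (2 powr (-c)) ^ j" for j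
  proof -
    have "(2::real) powr (- (real (j + J) * c)) = 2 powr (- (real J * c)) * 2 powr (- (real j * c))"
      by (simp add: powr_add[symmetric] algebra_simps)
    then show ?thesis by (simp only: e)
  qed
  show "(\<Sum>n. e * 2 powr (- (real (n + J) * c))) = e * 2 powr (- (real J * c)) / (1 - 2 powr (-c))"
    unfolding e2 using suminf_mult[OF summable_geometric[OF r], of "e * 2 powr (- (real J * c))"] suminf_geometric[OF r]
    by (simp add: mult.assoc)
qed

lemma tail_le:
  fixes c \<tau> :: real assumes c: "c > 0" and tp: "\<tau> > 0" and tJ: "\<tau> \<le> 2 powr real J"
  shows "2 powr (- (real J * c)) \<le> \<tau> powr (-c)"
proof -
  have "2 powr (- (real J * c)) = (2 powr real J) powr (-c)" by (simp add: powr_powr)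
  also have "\<dots> \<le> \<tau> powr (-c)" using c tp tJ by (intro powr_mono2') auto
  finally show ?thesis .
qed

lemma head_le:
  fixes c \<tau> :: real assumes c: "c > 0" and tp: "\<tau> > 0" and tJ: "J > 0 \<longrightarrow> 2 powr real J \<le> 2 * \<tau>"
  shows "(\<Sum>j<J. (2::real) powr (real j * c)) \<le> (2 * \<tau>) powr c / (2 powr c - 1)"
proof (cases "J = 0")
  case True
  have "2 powr c > (1::real)" using c by simp
  then show ?thesis using True tp by simp
next
  case False
  have g: "2 powr c > (1::real)" using c by simp
  have "(\<Sum>j<J. (2::real) powr (real j * c)) = (\<Sum>j<J. (2 powr c) ^ j)" by (simp add: pow2_eq)
  also have "\<dots> = ((2 powr c)^J - 1) / (2 powr c - 1)"
    using c by (intro geometric_sum) simp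
  also have "\<dots> \<le> (2 powr c)^J / (2 powr c - 1)" using g by (simp add: divide_right_mono)
  also have "(2 powr c)^J = (2 powr real J) powr c" by (simp add: pow2_eq[symmetric] powr_powr mult.commute)
  also have "\<dots> \<le> (2 * \<tau>) powr c" using False tJ c by (intro powr_mono2) auto
  finally show ?thesis using g by (simp add: divide_right_mono)
qed

lemma pm:
  fixes \<delta> \<tau> c e :: real assumes "\<delta> > 0" "\<tau> > 0"
  shows "(\<delta> * \<tau> powr c) powr e = \<delta> powr e * \<tau> powr (c * e)"
  using assms by (simp add: powr_mult powr_powr)

lemma S_bound:
  fixes X H Ee :: "nat \<Rightarrow> real" and M E \<delta> \<tau> \<rho> a q s :: real and J :: nat
  assumes q: "q > 1" and s: "s > 0" and \<beta>: "a - s * (q - 1) > 0"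
    and dp: "\<delta> > 0" and tp: "\<tau> > 0" and rho: "\<rho> = \<delta> * \<tau> powr (s + a)"
    and tJ: "\<tau> \<le> 2 powr real J" and tJ2: "J > 0 \<longrightarrow> 2 powr real J \<le> 2 * \<tau>"
    and hX: "\<And>j. 0 \<le> X j \<and> X j \<le> \<rho> * 2 powr (- (real j * s))"
    and hH: "\<And>j. 0 \<le> H j"
    and hXH: "\<And>j. \<bar>X j - H j\<bar> \<le> Ee j"
    and hE: "\<And>j. 2 powr (real j * - a) * Ee j \<le> M * E"
    and sX: "summable (\<lambda>j. X j powr q)" and sH: "summable (\<lambda>j. H j powr q)"
  shows "(\<Sum>j. X j powr q) / q - (\<Sum>j. H j powr q) / q
         \<le> \<delta> powr (q - 1) * \<tau> powr (q * a) *
            ((M * 2 powr (a - s * (q - 1)) / (2 powr (a - s * (q - 1)) - 1)) * E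
             + (1 / (q * (1 - 2 powr (- (s * q))))) * \<delta>)"
proof -
  define \<beta> where "\<beta> = a - s * (q - 1)"
  have bp: "\<beta> > 0" using \<beta> by (simp add: \<beta>_def)
  have rp: "\<rho> > 0" using rho dp tp by simp
  have ME: "M * E \<ge> 0" using hE[of 0] hXH[of 0] by (smt (verit) mult_nonneg_nonneg powr_ge_zero abs_ge_zero)
  define lo where "lo j = \<rho> powr (q - 1) * (M * E) * 2 powr (real j * \<beta>)" for j
  define hi where "hi j = (\<rho> powr q / q) * 2 powr (- (real j * (s * q)))" for j
  define f where "f j = (X j powr q - H j powr q) / q" for j
  have Sf: "(\<Sum>j. X j powr q) / q - (\<Sum>j. H j powr q) / q = suminf f"
    unfolding f_def using sX sH
    by (simp add: suminf_diff[symmetric] suminf_divide[symmetric] summable_diff diff_divide_distrib)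
  have sf: "summable f" unfolding f_def using sX sH by (intro summable_divide summable_diff)
  have sqp: "s * q > 0" using s q by simp
  have shi: "summable hi" unfolding hi_def using geo_tail(1)[OF sqp] .
  have Xq: "X j powr q \<le> \<rho> powr q * 2 powr (- (real j * (s * q)))" for j
  proof -
    have "X j powr q \<le> (\<rho> * 2 powr (- (real j * s))) powr q" using hX[of j] q by (intro powr_mono2) auto
    also have "\<dots> = \<rho> powr q * 2 powr (- (real j * (s * q)))" using rp by (simp add: powr_mult powr_powr mult.assoc)
    finally show ?thesis .
  qed
  have fle: "f j \<le> (if j < J then lo j else hi j)" for j
  proof (cases "j < J")
    case True
    have "f j \<le> X j powr (q - 1) * \<bar>X j - H j\<bar>" unfolding f_def
      using powr_diff_le[of q "X j" "H j"] q hX[of j] hH[of j] by simp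
    also have "\<dots> \<le> X j powr (q - 1) * Ee j" using hXH[of j] by (intro mult_left_mono) auto
    also have "\<dots> \<le> (\<rho> powr (q - 1) * 2 powr (- (real j * s * (q - 1)))) * (M * E * 2 powr (real j * a))"
    proof (intro mult_mono)
      have "X j powr (q - 1) \<le> (\<rho> * 2 powr (- (real j * s))) powr (q - 1)"
        using hX[of j] q by (intro powr_mono2) auto
      also have "\<dots> = \<rho> powr (q - 1) * 2 powr (- (real j * s * (q - 1)))" using rp by (simp add: powr_mult powr_powr)
      finally show "X j powr (q - 1) \<le> \<rho> powr (q - 1) * 2 powr (- (real j * s * (q - 1)))" .
      have "Ee j = 2 powr (real j * a) * (2 powr (real j * - a) * Ee j)"
        by (simp add: powr_add[symmetric])
      also have "\<dots> \<le> 2 powr (real j * a) * (M * E)" using hE[of j] by (intro mult_left_mono) auto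
      finally show "Ee j \<le> M * E * 2 powr (real j * a)" by (simp add: mult.commute)
      show "0 \<le> \<rho> powr (q - 1) * 2 powr (- (real j * s * (q - 1)))" by simp
      show "0 \<le> Ee j" using hXH[of j] by (smt (verit))
    qed
    also have "\<dots> = lo j" unfolding lo_def \<beta>_def
      by (simp add: powr_add[symmetric] algebra_simps)
    finally show ?thesis using True by simp
  next
    case False
    have "f j \<le> X j powr q / q" unfolding f_def using q by (intro divide_right_mono) auto
    also have "\<dots> \<le> \<rho> powr q * 2 powr (- (real j * (s * q))) / q" using Xq[of j] q by (intro divide_right_mono) auto
    finally show ?thesis using False by (simp add: hi_def)
  qed
  have "suminf f \<le> (\<Sum>j<J. lo j) + (\<Sum>n. hi (n + J))" by (rule split_sum_bound[OF sf shi fle])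
  also have "(\<Sum>j<J. lo j) = \<rho> powr (q - 1) * (M * E) * (\<Sum>j<J. 2 powr (real j * \<beta>))"
    by (simp add: lo_def sum_distrib_left)
  also have "\<dots> \<le> \<rho> powr (q - 1) * (M * E) * ((2 * \<tau>) powr \<beta> / (2 powr \<beta> - 1))"
    using head_le[OF bp tp tJ2] ME by (intro mult_left_mono) auto
  also have "(\<Sum>n. hi (n + J)) = (\<rho> powr q / q) * 2 powr (- (real J * (s * q))) / (1 - 2 powr (- (s * q)))"
    unfolding hi_def by (rule geo_tail(2)[OF sqp])
  also have "\<dots> \<le> (\<rho> powr q / q) * \<tau> powr (- (s * q)) / (1 - 2 powr (- (s * q)))"
  proof -
    have "(2::real) powr (- (s * q)) < 2 powr 0" using sqp by (intro powr_less_mono) auto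
    then have "1 - 2 powr (- (s * q)) > 0" by simp
    then show ?thesis using tail_le[OF sqp tp tJ] q by (intro divide_right_mono mult_left_mono) auto
  qed
  also have "\<rho> powr (q - 1) * (M * E) * ((2 * \<tau>) powr \<beta> / (2 powr \<beta> - 1))
      = \<delta> powr (q - 1) * \<tau> powr (q * a) * ((M * 2 powr \<beta> / (2 powr \<beta> - 1)) * E)"
  proof -
    have "\<rho> powr (q - 1) * (2 * \<tau>) powr \<beta> = \<delta> powr (q - 1) * \<tau> powr ((s + a) * (q - 1)) * (2 powr \<beta> * \<tau> powr \<beta>)"
      unfolding rho using dp tp by (simp add: pm powr_mult powr_powr)
    also have "\<dots> = \<delta> powr (q - 1) * 2 powr \<beta> * \<tau> powr ((s + a) * (q - 1) + \<beta>)"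
      by (simp add: powr_add)
    also have "(s + a) * (q - 1) + \<beta> = q * a" unfolding \<beta>_def by (simp add: algebra_simps)
    finally have "\<rho> powr (q - 1) * (2 * \<tau>) powr \<beta> = \<delta> powr (q - 1) * 2 powr \<beta> * \<tau> powr (q * a)" .
    then show ?thesis by (simp add: field_simps)
  qed
  also have "(\<rho> powr q / q) * \<tau> powr (- (s * q)) / (1 - 2 powr (- (s * q)))
      = \<delta> powr (q - 1) * \<tau> powr (q * a) * ((1 / (q * (1 - 2 powr (- (s * q))))) * \<delta>)"
  proof -
    have r1: "\<rho> powr q = \<delta> powr q * \<tau> powr ((s + a) * q)" unfolding rho using dp tp by (rule pm)
    have r2: "\<tau> powr ((s + a) * q) * \<tau> powr (- (s * q)) = \<tau> powr ((s + a) * q + - (s * q))"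
      by (rule powr_add[symmetric])
    have r3: "(s + a) * q + - (s * q) = q * a" by (simp add: algebra_simps)
    have "\<rho> powr q * \<tau> powr (- (s * q)) = \<delta> powr q * \<tau> powr (q * a)"
      unfolding r1 mult.assoc r2 r3 ..
    also have "\<delta> powr q = \<delta> powr (q - 1) * \<delta>" using dp by (simp add: powr_diff)
    finally have "\<rho> powr q * \<tau> powr (- (s * q)) = \<delta> powr (q - 1) * \<delta> * \<tau> powr (q * a)" .
    then show ?thesis by (simp add: field_simps)
  qed
  finally show ?thesis using Sf \<beta>_def by (simp add: algebra_simps)
qed


lemma sq_powr: "(x::real) \<ge> 0 \<Longrightarrow> (x powr c)\<^sup>2 = x powr (2 * c)"
  by (simp add: power2_eq_square powr_add[symmetric])

lemma one_minus_pos: "c > 0 \<Longrightarrow> 1 - (2::real) powr (- c) > 0"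
proof -
  assume "c > 0"
  then have "(2::real) powr (- c) < 2 powr 0" by (intro powr_less_mono) auto
  then show ?thesis by simp
qed

lemma E_bound:
  fixes X H Ee :: "nat \<Rightarrow> real" and M E \<delta> \<tau> \<rho> a q s cE K1 :: real and J :: nat
  assumes q: "q > 1" and s: "s > 0" and a: "a > 0"
    and dp: "\<delta> > 0" and tp: "\<tau> > 0" and rho: "\<rho> = \<delta> * \<tau> powr (s + a)"
    and tJ: "\<tau> \<le> 2 powr real J" and tJ2: "J > 0 \<longrightarrow> 2 powr real J \<le> 2 * \<tau>"
    and hX: "\<And>j. 0 \<le> X j \<and> X j \<le> \<rho> * 2 powr (- (real j * s))"
    and hH: "\<And>j. 0 \<le> H j \<and> H j \<le> K1 * \<delta> * \<tau> powr (q * a / (q - 1)) * 2 powr (- (real j * (a / (q - 1))))"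
    and hXH: "\<And>j. 0 \<le> Ee j \<and> Ee j \<le> X j + H j"
    and hE: "\<And>j. 2 powr (real j * - a) * Ee j \<le> M * E"
    and EcE: "E \<le> cE * \<delta>" and M0: "M \<ge> 0" and K0: "K1 \<ge> 0"
  shows "summable (\<lambda>j. (Ee j)\<^sup>2) \<and>
         (\<Sum>j. (Ee j)\<^sup>2) \<le> (M\<^sup>2 * cE\<^sup>2 * 2 powr (2 * a) / (2 powr (2 * a) - 1) + 2 / (1 - 2 powr (- (2 * s)))
             + 2 * K1\<^sup>2 / (1 - 2 powr (- (2 * (a / (q - 1)))))) * (\<delta> * \<tau> powr a)\<^sup>2"
proof -
  define c3 where "c3 = a / (q - 1)"
  have c3p: "c3 > 0" using a q by (simp add: c3_def)
  have s2: "2 * s > 0" using s by simp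
  have c32: "2 * c3 > 0" using c3p by simp
  have a2: "2 * a > 0" using a by simp
  define B where "B = K1 * \<delta> * \<tau> powr (q * a / (q - 1))"
  define hiX where "hiX j = (2 * \<rho>\<^sup>2) * 2 powr (- (real j * (2 * s)))" for j
  define hiH where "hiH j = (2 * B\<^sup>2) * 2 powr (- (real j * (2 * c3)))" for j
  have shX: "summable hiX" unfolding hiX_def by (rule geo_tail(1)[OF s2])
  have shH: "summable hiH" unfolding hiH_def by (rule geo_tail(1)[OF c32])
  have sh: "summable (\<lambda>j. hiX j + hiH j)" using shX shH by (rule summable_add)
  have rp: "\<rho> > 0" using rho dp tp by simp
  have hile: "(Ee j)\<^sup>2 \<le> hiX j + hiH j" for j
  proof -
    have "(Ee j)\<^sup>2 \<le> (X j + H j)\<^sup>2" using hXH[of j] by (intro power_mono) auto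
    also have "\<dots> \<le> 2 * (X j)\<^sup>2 + 2 * (H j)\<^sup>2"
    proof -
      have "0 \<le> (X j - H j)\<^sup>2" by simp
      then show ?thesis by (simp add: power2_eq_square algebra_simps)
    qed
    also have "(X j)\<^sup>2 \<le> (\<rho> * 2 powr (- (real j * s)))\<^sup>2" using hX[of j] by (intro power_mono) auto
    also have "\<dots> = \<rho>\<^sup>2 * 2 powr (- (real j * (2 * s)))"
      by (simp add: power_mult_distrib sq_powr mult_ac)
    also have "(H j)\<^sup>2 \<le> (B * 2 powr (- (real j * c3)))\<^sup>2" using hH[of j] by (intro power_mono) (auto simp: B_def c3_def)
    also have "\<dots> = B\<^sup>2 * 2 powr (- (real j * (2 * c3)))"
      by (simp add: power_mult_distrib sq_powr mult_ac)
    finally show ?thesis by (simp add: hiX_def hiH_def)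
  qed
  have sE: "summable (\<lambda>j. (Ee j)\<^sup>2)"
    by (rule summable_comparison_test'[OF sh]) (use hile in auto)
  define lo where "lo j = (M * cE * \<delta>)\<^sup>2 * 2 powr (real j * (2 * a))" for j
  have fle: "(Ee j)\<^sup>2 \<le> (if j < J then lo j else hiX j + hiH j)" for j
  proof (cases "j < J")
    case True
    have "Ee j = 2 powr (real j * a) * (2 powr (real j * - a) * Ee j)"
      by (simp add: powr_add[symmetric])
    also have "\<dots> \<le> 2 powr (real j * a) * (M * E)" using hE[of j] by (intro mult_left_mono) auto
    also have "\<dots> \<le> 2 powr (real j * a) * (M * (cE * \<delta>))" using EcE M0 by (intro mult_left_mono) auto
    finally have "(Ee j)\<^sup>2 \<le> (2 powr (real j * a) * (M * (cE * \<delta>)))\<^sup>2" using hXH[of j] by (intro power_mono) auto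
    also have "\<dots> = lo j" unfolding lo_def by (simp add: power_mult_distrib sq_powr mult_ac)
    finally show ?thesis using True by simp
  next
    case False then show ?thesis using hile[of j] by simp
  qed
  have "(\<Sum>j. (Ee j)\<^sup>2) \<le> (\<Sum>j<J. lo j) + (\<Sum>n. hiX (n + J) + hiH (n + J))"
    by (rule split_sum_bound[OF sE sh fle])
  also have "(\<Sum>n. hiX (n + J) + hiH (n + J)) = (\<Sum>n. hiX (n + J)) + (\<Sum>n. hiH (n + J))"
    using shX shH by (intro suminf_add[symmetric]) (auto simp: summable_iff_shift)
  also have "(\<Sum>n. hiX (n + J)) = (2 * \<rho>\<^sup>2) * 2 powr (- (real J * (2 * s))) / (1 - 2 powr (- (2 * s)))"
    unfolding hiX_def by (rule geo_tail(2)[OF s2])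
  also have "(\<Sum>n. hiH (n + J)) = (2 * B\<^sup>2) * 2 powr (- (real J * (2 * c3))) / (1 - 2 powr (- (2 * c3)))"
    unfolding hiH_def by (rule geo_tail(2)[OF c32])
  also have "(\<Sum>j<J. lo j) = (M * cE * \<delta>)\<^sup>2 * (\<Sum>j<J. 2 powr (real j * (2 * a)))"
    by (simp add: lo_def sum_distrib_left)
  also have "\<dots> \<le> (M * cE * \<delta>)\<^sup>2 * ((2 * \<tau>) powr (2 * a) / (2 powr (2 * a) - 1))"
    using head_le[OF a2 tp tJ2] by (intro mult_left_mono) auto
  also have "(2 * \<rho>\<^sup>2) * 2 powr (- (real J * (2 * s))) / (1 - 2 powr (- (2 * s)))
        \<le> (2 * \<rho>\<^sup>2) * \<tau> powr (- (2 * s)) / (1 - 2 powr (- (2 * s)))"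
    using tail_le[OF s2 tp tJ] one_minus_pos[OF s2] by (intro divide_right_mono mult_left_mono) auto
  also have "(2 * B\<^sup>2) * 2 powr (- (real J * (2 * c3))) / (1 - 2 powr (- (2 * c3)))
        \<le> (2 * B\<^sup>2) * \<tau> powr (- (2 * c3)) / (1 - 2 powr (- (2 * c3)))"
    using tail_le[OF c32 tp tJ] one_minus_pos[OF c32] by (intro divide_right_mono mult_left_mono) auto
  also have "(M * cE * \<delta>)\<^sup>2 * ((2 * \<tau>) powr (2 * a) / (2 powr (2 * a) - 1))
      = M\<^sup>2 * cE\<^sup>2 * 2 powr (2 * a) / (2 powr (2 * a) - 1) * (\<delta> * \<tau> powr a)\<^sup>2"
    using tp by (simp add: powr_mult sq_powr power_mult_distrib field_simps)
  also have "(2 * \<rho>\<^sup>2) * \<tau> powr (- (2 * s)) / (1 - 2 powr (- (2 * s)))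
      = 2 / (1 - 2 powr (- (2 * s))) * (\<delta> * \<tau> powr a)\<^sup>2"
  proof -
    have "\<rho>\<^sup>2 * \<tau> powr (- (2 * s)) = \<delta>\<^sup>2 * (\<tau> powr (2 * (s + a)) * \<tau> powr (- (2 * s)))"
      unfolding rho by (simp add: power_mult_distrib sq_powr tp less_imp_le)
    also have "\<tau> powr (2 * (s + a)) * \<tau> powr (- (2 * s)) = \<tau> powr (2 * (s + a) + - (2 * s))" by (rule powr_add[symmetric])
    also have "2 * (s + a) + - (2 * s) = 2 * a" by simp
    finally have "\<rho>\<^sup>2 * \<tau> powr (- (2 * s)) = (\<delta> * \<tau> powr a)\<^sup>2"
      by (simp add: power_mult_distrib sq_powr tp less_imp_le)
    then show ?thesis by (simp add: field_simps)
  qed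
  also have "(2 * B\<^sup>2) * \<tau> powr (- (2 * c3)) / (1 - 2 powr (- (2 * c3)))
      = 2 * K1\<^sup>2 / (1 - 2 powr (- (2 * (a / (q - 1))))) * (\<delta> * \<tau> powr a)\<^sup>2"
  proof -
    have "B\<^sup>2 * \<tau> powr (- (2 * c3)) = (K1 * \<delta>)\<^sup>2 * (\<tau> powr (2 * (q * a / (q - 1))) * \<tau> powr (- (2 * c3)))"
      unfolding B_def by (simp add: power_mult_distrib sq_powr tp less_imp_le)
    also have "\<tau> powr (2 * (q * a / (q - 1))) * \<tau> powr (- (2 * c3)) = \<tau> powr (2 * (q * a / (q - 1)) + - (2 * c3))"
      by (rule powr_add[symmetric])
    also have "2 * (q * a / (q - 1)) + - (2 * c3) = 2 * a"
    proof -
      have "q * a / (q - 1) - a / (q - 1) = (q * a - a) / (q - 1)" by (simp add: diff_divide_distrib)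
      also have "\<dots> = a" using q by (simp add: field_simps)
      finally show ?thesis unfolding c3_def by simp
    qed
    finally have "B\<^sup>2 * \<tau> powr (- (2 * c3)) = K1\<^sup>2 * (\<delta> * \<tau> powr a)\<^sup>2"
      by (simp add: power_mult_distrib sq_powr tp less_imp_le)
    then show ?thesis unfolding c3_def by (simp add: field_simps)
  qed
  finally show ?thesis using sE by (simp add: algebra_simps)
qed

lemma quad_bound:
  fixes E \<delta> p p' :: real
  assumes "\<delta> > 0" "E \<ge> 0" "p \<ge> 0" "p' \<ge> 0" "E\<^sup>2 \<le> p * \<delta> * E + p' * \<delta>\<^sup>2"
  shows "E \<le> (1 + p + p') * \<delta>"
proof (cases "E \<le> \<delta>")
  case True
  have "(1::real) \<le> 1 + p + p'" using assms by simp
  then have "1 * \<delta> \<le> (1 + p + p') * \<delta>" using assms by (intro mult_right_mono) auto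
  then show ?thesis using True by simp
next
  case False
  then have "p' * \<delta>\<^sup>2 \<le> p' * \<delta> * E" using assms by (simp add: power2_eq_square mult_left_mono mult.assoc)
  then have "E * E \<le> ((p + p') * \<delta>) * E" using assms(5) by (simp add: power2_eq_square algebra_simps)
  then have "E \<le> (p + p') * \<delta>" using False assms by (simp add: mult_le_cancel_right_pos)
  moreover have "(1 + p + p') * \<delta> = \<delta> + (p + p') * \<delta>" by (simp add: algebra_simps)
  ultimately show ?thesis using assms by linarith
qed

lemma case_analysis:
  fixes \<delta> E r I P k1 k2 cl cr cD CD :: real
  assumes dp: "\<delta> > 0" and E0: "E \<ge> 0" and r0: "r \<ge> 0" and k1: "k1 \<ge> 0" and k2: "k2 > 0"
    and hI1: "E\<^sup>2 - \<delta> * E \<le> I" and hI2: "r\<^sup>2 - r * \<delta> \<le> I" and hIS: "I \<le> P * (k1 * E + k2 * \<delta>)"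
    and hEr: "E \<le> \<delta> + r" and hrE: "r \<le> \<delta> + E"
    and cases: "(cl * \<delta> \<le> P \<and> P \<le> cr * \<delta>) \<or> (cD * \<delta> \<le> r \<and> r \<le> CD * \<delta>)"
    and cl: "cl > 0" "cl \<le> cr" and cD: "1 < cD" "cD < CD"
  shows "E \<le> max (2 + cr * k1 + cr * k2) (1 + CD) * \<delta> \<and>
         r \<le> (1 + max (2 + cr * k1 + cr * k2) (1 + CD)) * \<delta> \<and>
         min cl (cD * (cD - 1) / (k1 * (1 + CD) + k2)) * \<delta> \<le> P"
proof -
  let ?cE = "max (2 + cr * k1 + cr * k2) (1 + CD)"
  let ?k0 = "min cl (cD * (cD - 1) / (k1 * (1 + CD) + k2))"
  have kk: "k1 * E + k2 * \<delta> \<ge> 0" using k1 k2 E0 dp by simp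
  have main: "E \<le> ?cE * \<delta> \<and> ?k0 * \<delta> \<le> P"
  proof (cases "cl * \<delta> \<le> P \<and> P \<le> cr * \<delta>")
    case True
    have "E\<^sup>2 - \<delta> * E \<le> cr * \<delta> * (k1 * E + k2 * \<delta>)"
    proof -
      have "P * (k1 * E + k2 * \<delta>) \<le> cr * \<delta> * (k1 * E + k2 * \<delta>)" using True kk by (intro mult_right_mono) auto
      then show ?thesis using hI1 hIS by linarith
    qed
    then have "E\<^sup>2 \<le> (1 + cr * k1) * \<delta> * E + (cr * k2) * \<delta>\<^sup>2"
      by (simp add: algebra_simps power2_eq_square)
    from quad_bound[OF dp E0 _ _ this] have "E \<le> (1 + (1 + cr * k1) + cr * k2) * \<delta>"
      using cl k1 k2 by simp
    moreover have "(1 + (1 + cr * k1) + cr * k2) * \<delta> \<le> ?cE * \<delta>" using dp by (intro mult_right_mono) auto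
    ultimately have "E \<le> ?cE * \<delta>" by linarith
    moreover have "?k0 * \<delta> \<le> cl * \<delta>" using dp by (intro mult_right_mono) auto
    then have "?k0 * \<delta> \<le> P" using True by linarith
    ultimately show ?thesis by simp
  next
    case False
    then have rr: "cD * \<delta> \<le> r" "r \<le> CD * \<delta>" using cases by auto
    have "E \<le> (1 + CD) * \<delta>" using hEr rr by (simp add: algebra_simps)
    moreover have "(1 + CD) * \<delta> \<le> ?cE * \<delta>" using dp by (intro mult_right_mono) auto
    ultimately have EE: "E \<le> ?cE * \<delta>" by linarith
    have "cD * (cD - 1) * \<delta>\<^sup>2 \<le> r * (r - \<delta>)"
    proof -
      have "cD * \<delta> * ((cD - 1) * \<delta>) \<le> r * (r - \<delta>)"
        using rr cD dp r0 by (intro mult_mono) (auto simp: algebra_simps)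
      then show ?thesis by (simp add: power2_eq_square algebra_simps)
    qed
    also have "\<dots> \<le> P * (k1 * E + k2 * \<delta>)" using hI2 hIS by (simp add: algebra_simps power2_eq_square)
    also have "\<dots> \<le> P * ((k1 * (1 + CD) + k2) * \<delta>)"
    proof -
      have P0: "P \<ge> 0"
      proof (rule ccontr)
        assume "\<not> P \<ge> 0"
        then have "P * (k1 * E + k2 * \<delta>) \<le> 0" using kk by (simp add: mult_nonpos_nonneg)
        moreover have "cD * (cD - 1) * \<delta>\<^sup>2 > 0" using cD dp by simp
        ultimately show False using \<open>cD * (cD - 1) * \<delta>\<^sup>2 \<le> r * (r - \<delta>)\<close> hI2 hIS
          by (simp add: algebra_simps power2_eq_square)
      qed
      have "k1 * E \<le> k1 * ((1 + CD) * \<delta>)" using \<open>E \<le> (1 + CD) * \<delta>\<close> k1 by (intro mult_left_mono) auto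
      then show ?thesis using P0 by (intro mult_left_mono) (auto simp: algebra_simps)
    qed
    finally have "cD * (cD - 1) * \<delta>\<^sup>2 \<le> P * ((k1 * (1 + CD) + k2) * \<delta>)" .
    then have "cD * (cD - 1) * \<delta> * \<delta> \<le> (P * (k1 * (1 + CD) + k2)) * \<delta>" by (simp add: power2_eq_square algebra_simps)
    then have "cD * (cD - 1) * \<delta> \<le> P * (k1 * (1 + CD) + k2)" using dp by simp
    moreover have den: "k1 * (1 + CD) + k2 > 0"
    proof -
      have "k1 * (1 + CD) \<ge> 0" using k1 cD by simp
      then show ?thesis using k2 by linarith
    qed
    ultimately have "cD * (cD - 1) / (k1 * (1 + CD) + k2) * \<delta> \<le> P" by (simp add: field_simps)
    moreover have "?k0 * \<delta> \<le> cD * (cD - 1) / (k1 * (1 + CD) + k2) * \<delta>" using dp by (intro mult_right_mono) auto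
    ultimately have "?k0 * \<delta> \<le> P" by linarith
    with EE show ?thesis by simp
  qed
  then show ?thesis using hrE by (simp add: algebra_simps)
qed

lemma H_bound:
  fixes \<alpha> H q r M a cr' \<delta> k0 \<Phi> \<tau> :: real and j :: nat
  assumes alpha: "\<alpha> > 0" and H0: "H \<ge> 0" and q: "q > 1" and M0: "M \<ge> 0"
    and dp: "\<delta> > 0" and tp: "\<tau> > 0" and k0: "k0 > 0" and cr': "cr' \<ge> 0"
    and lev: "\<alpha> * H powr q / q \<le> r * (M * (2 powr (real j * - a) * H))"
    and rb: "r \<le> cr' * \<delta>" and Pb: "k0 * \<delta> \<le> \<alpha> * \<Phi>"
    and Phi: "\<Phi> = \<delta> powr (q - 1) * \<tau> powr (q * a)"
  shows "H \<le> (q * M * cr' / k0) powr (1 / (q - 1)) * \<delta> * \<tau> powr (q * a / (q - 1)) * 2 powr (- (real j * (a / (q - 1))))"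
proof (cases "H = 0")
  case True then show ?thesis using tp dp by simp
next
  case False
  then have Hp: "H > 0" using H0 by simp
  have Php: "\<Phi> > 0" using Phi dp tp by simp
  define K where "K = q * M * cr' / k0"
  have K: "K \<ge> 0" using q M0 cr' k0 by (simp add: K_def)
  have "H powr q = H powr (q - 1) * H" using Hp by (simp add: powr_diff)
  then have "\<alpha> * H powr (q - 1) / q * H \<le> (r * M * 2 powr (real j * - a)) * H" using lev by (simp add: algebra_simps)
  then have "\<alpha> * H powr (q - 1) / q \<le> r * M * 2 powr (real j * - a)" by (rule mult_right_le_imp_le[OF _ Hp])
  then have h1: "H powr (q - 1) \<le> q * (r * M * 2 powr (real j * - a)) / \<alpha>" using alpha q by (simp add: field_simps)
  also have "\<dots> \<le> q * (cr' * \<delta> * M * 2 powr (real j * - a)) / \<alpha>"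
    using rb q M0 alpha by (intro divide_right_mono mult_left_mono mult_right_mono) auto
  also have "\<dots> \<le> K * \<Phi> * 2 powr (real j * - a)"
  proof -
    have "1 / \<alpha> \<le> \<Phi> / (k0 * \<delta>)" using Pb alpha k0 dp Php by (simp add: field_simps)
    then have "(q * cr' * \<delta> * M * 2 powr (real j * - a)) * (1 / \<alpha>) \<le> (q * cr' * \<delta> * M * 2 powr (real j * - a)) * (\<Phi> / (k0 * \<delta>))"
      using q cr' dp M0 by (intro mult_left_mono) auto
    then show ?thesis using dp k0 by (simp add: field_simps K_def)
  qed
  finally have h2: "H powr (q - 1) \<le> K * \<Phi> * 2 powr (real j * - a)" .
  have "H = (H powr (q - 1)) powr (1 / (q - 1))" using q Hp by (simp add: powr_powr)
  also have "\<dots> \<le> (K * \<Phi> * 2 powr (real j * - a)) powr (1 / (q - 1))"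
    using h2 q by (intro powr_mono2) auto
  also have "\<dots> = K powr (1 / (q - 1)) * \<Phi> powr (1 / (q - 1)) * (2 powr (real j * - a)) powr (1 / (q - 1))"
  proof -
    have K: "q * M * cr' / k0 \<ge> 0" using q M0 cr' k0 by simp
    have "(K * \<Phi> * 2 powr (real j * - a)) powr (1 / (q - 1))
        = (K * \<Phi>) powr (1 / (q - 1)) * (2 powr (real j * - a)) powr (1 / (q - 1))"
      using K Php by (auto intro: powr_mult)
    also have "(K * \<Phi>) powr (1 / (q - 1)) = K powr (1 / (q - 1)) * \<Phi> powr (1 / (q - 1))"
      using K Php by (auto intro: powr_mult)
    finally show ?thesis .
  qed
  also have "\<Phi> powr (1 / (q - 1)) = \<delta> * \<tau> powr (q * a / (q - 1))"
    unfolding Phi using dp tp q by (simp add: powr_mult powr_powr)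
  also have "(2 powr (real j * - a)) powr (1 / (q - 1)) = 2 powr (- (real j * (a / (q - 1))))"
    by (simp add: powr_powr)
  finally show ?thesis by (simp add: mult.assoc K_def)
qed

locale bsetup =
  fixes d :: nat and Lam :: "nat \<Rightarrow> 'k set"
    and A :: "(nat \<Rightarrow> 'k \<Rightarrow> real) \<Rightarrow> 'y::{real_inner, complete_space}"
    and M a q :: real
  assumes a_pos: "a > 0" and q_gt: "q > 1" and M_ge: "M \<ge> 1"
    and A_add: "\<And>x y. on_Lambda Lam x \<Longrightarrow> in_besov d Lam 2 2 (-a) x \<Longrightarrow>
                        on_Lambda Lam y \<Longrightarrow> in_besov d Lam 2 2 (-a) y \<Longrightarrow> A (\<lambda>j k. x j k + y j k) = A x + A y"
    and A_scale: "\<And>c x. on_Lambda Lam x \<Longrightarrow> in_besov d Lam 2 2 (-a) x \<Longrightarrow> A (\<lambda>j k. c * x j k) = c *\<^sub>R A x"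
    and A_bounds: "\<And>x. on_Lambda Lam x \<Longrightarrow> in_besov d Lam 2 2 (-a) x \<Longrightarrow>
                   (1 / M) * besov_norm d Lam 2 2 (-a) x \<le> norm (A x) \<and>
                   norm (A x) \<le> M * besov_norm d Lam 2 2 (-a) x"
begin

definition nl :: "(nat \<Rightarrow> 'k \<Rightarrow> real) \<Rightarrow> nat \<Rightarrow> real" where
  "nl z j = L2_set (z j) (Lam j)"

lemma nl_nonneg [simp]: "nl z j \<ge> 0" by (simp add: nl_def)

lemma level_eq: "besov_level d Lam 2 s z j = 2 powr (real j * s) * nl z j"
proof -
  have "lp_norm 2 (Lam j) (z j) = nl z j"
    unfolding lp_norm_def nl_def L2_set_def abs_powr_two
    by (simp add: powr_half_sqrt sum_nonneg)
  then show ?thesis by (simp add: besov_level_def)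
qed

lemma in_besov2: "in_besov d Lam 2 2 s z \<longleftrightarrow> summable (\<lambda>j. (2 powr (real j * s) * nl z j)\<^sup>2)"
  unfolding in_besov_def level_eq by (simp add: nonneg_powr_two)

lemma norm_besov2:
  assumes "in_besov d Lam 2 2 s z"
  shows "besov_norm d Lam 2 2 s z = sqrt (\<Sum>j. (2 powr (real j * s) * nl z j)\<^sup>2)"
  using assms unfolding besov_norm_def level_eq in_besov2
  by (simp add: nonneg_powr_two powr_half_sqrt suminf_nonneg)

lemma in_besovq: "in_besov d Lam 2 q 0 z \<longleftrightarrow> summable (\<lambda>j. nl z j powr q)"
  unfolding in_besov_def level_eq by simp

lemma penalty_eq:
  assumes "summable (\<lambda>j. nl z j powr q)"
  shows "penalty d Lam q z = (\<Sum>j. nl z j powr q) / q"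
proof -
  have S: "(\<Sum>j. nl z j powr q) \<ge> 0" using assms by (intro suminf_nonneg) auto
  have "besov_norm d Lam 2 q 0 z powr q = ((\<Sum>j. nl z j powr q) powr (1/q)) powr q"
    unfolding besov_norm_def level_eq by simp
  also have "\<dots> = (\<Sum>j. nl z j powr q)" using S q_gt by (simp add: powr_powr)
  finally show ?thesis by (simp add: penalty_def)
qed

lemma nl_add: "nl (\<lambda>j k. u j k + v j k) j \<le> nl u j + nl v j"
  unfolding nl_def by (rule L2_set_triangle_ineq)

lemma nl_scale: "nl (\<lambda>j k. c * u j k) j = \<bar>c\<bar> * nl u j"
  unfolding nl_def L2_set_def
  by (simp add: power_mult_distrib real_sqrt_mult sum_distrib_left[symmetric])

lemma nl_uminus: "nl (\<lambda>j k. - v j k) j = nl v j"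
  by (simp add: nl_def L2_set_def)

lemma nl_diff: "nl (\<lambda>j k. u j k - v j k) j \<le> nl u j + nl v j"
proof -
  have "nl (\<lambda>j k. u j k - v j k) j = nl (\<lambda>j k. u j k + (-1) * v j k) j" by simp
  also have "\<dots> \<le> nl u j + nl (\<lambda>j k. (-1) * v j k) j" by (rule nl_add)
  finally show ?thesis by (simp add: nl_uminus)
qed

lemma nl_diff_ge: "\<bar>nl u j - nl v j\<bar> \<le> nl (\<lambda>j k. u j k - v j k) j"
proof -
  have "nl u j \<le> nl (\<lambda>j k. u j k - v j k) j + nl v j"
    using nl_add[of "\<lambda>j k. u j k - v j k" v j] by simp
  moreover have "nl v j \<le> nl (\<lambda>j k. u j k - v j k) j + nl u j"
    using nl_add[of "\<lambda>j k. v j k - u j k" u j] nl_scale[of "-1" "\<lambda>j k. u j k - v j k" j] by simp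
  ultimately show ?thesis by linarith
qed


lemma sq_pow2: "(2 powr (real j * - a))\<^sup>2 = (2::real) powr (- (real j * (2 * a)))"
  by (simp add: power2_eq_square powr_add[symmetric] mult_ac)

lemma Hm_bounded:
  assumes "\<And>j. nl z j \<le> B"
  shows "in_besov d Lam 2 2 (-a) z"
  unfolding in_besov2
proof (rule summable_comparison_test')
  show "summable (\<lambda>j. B\<^sup>2 * 2 powr (- (real j * (2 * a))))"
    using geo_sum_tail(1)[of "2 * a"] a_pos by (intro summable_mult) auto
  fix j :: nat
  have "(2 powr (real j * - a) * nl z j)\<^sup>2 = (2 powr (real j * - a))\<^sup>2 * (nl z j)\<^sup>2"
    by (simp add: power_mult_distrib)
  also have "\<dots> \<le> (2 powr (real j * - a))\<^sup>2 * B\<^sup>2"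
    using assms[of j] by (intro mult_left_mono power_mono) auto
  also have "\<dots> = B\<^sup>2 * 2 powr (- (real j * (2 * a)))"
    unfolding sq_pow2 by (simp only: mult.commute)
  finally show "norm ((2 powr (real j * - a) * nl z j)\<^sup>2) \<le> B\<^sup>2 * 2 powr (- (real j * (2 * a)))"
    by simp
qed

lemma term_le_suminf:
  fixes f :: "nat \<Rightarrow> real"
  assumes "summable f" "\<And>n. 0 \<le> f n"
  shows "f j \<le> suminf f"
  using sum_le_suminf[OF assms(1), of "{j}"] assms(2) by auto

lemma Dq_bounded:
  assumes "summable (\<lambda>j. nl z j powr q)"
  shows "nl z j \<le> (\<Sum>j. nl z j powr q) powr (1/q)"
proof -
  have "nl z j powr q \<le> (\<Sum>j. nl z j powr q)"
    using assms by (intro term_le_suminf) auto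
  then have "(nl z j powr q) powr (1/q) \<le> (\<Sum>j. nl z j powr q) powr (1/q)"
    using q_gt by (intro powr_mono2) auto
  then show ?thesis using q_gt by (simp add: powr_powr)
qed

lemma Hm_of_Dq:
  assumes "summable (\<lambda>j. nl z j powr q)"
  shows "in_besov d Lam 2 2 (-a) z"
  using Dq_bounded[OF assms] by (rule Hm_bounded)

lemma Hm_lin:
  assumes "in_besov d Lam 2 2 (-a) u" "in_besov d Lam 2 2 (-a) v"
  shows "in_besov d Lam 2 2 (-a) (\<lambda>j k. c * u j k + e * v j k)"
  using assms unfolding in_besov2
proof -
  assume su: "summable (\<lambda>j. (2 powr (real j * - a) * nl u j)\<^sup>2)"
     and sv: "summable (\<lambda>j. (2 powr (real j * - a) * nl v j)\<^sup>2)"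
  show "summable (\<lambda>j. (2 powr (real j * - a) * nl (\<lambda>j k. c * u j k + e * v j k) j)\<^sup>2)"
  proof (rule summable_comparison_test')
    show "summable (\<lambda>j. 2 * c\<^sup>2 * (2 powr (real j * - a) * nl u j)\<^sup>2 + 2 * e\<^sup>2 * (2 powr (real j * - a) * nl v j)\<^sup>2)"
      using su sv by (intro summable_add summable_mult)
    fix j :: nat
    let ?w = "2 powr (real j * - a)"
    have "nl (\<lambda>j k. c * u j k + e * v j k) j \<le> \<bar>c\<bar> * nl u j + \<bar>e\<bar> * nl v j"
      using nl_add[of "\<lambda>j k. c * u j k" "\<lambda>j k. e * v j k" j] by (simp add: nl_scale)
    then have "?w * nl (\<lambda>j k. c * u j k + e * v j k) j \<le> ?w * (\<bar>c\<bar> * nl u j + \<bar>e\<bar> * nl v j)"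
      by (intro mult_left_mono) auto
    then have "(?w * nl (\<lambda>j k. c * u j k + e * v j k) j)\<^sup>2 \<le> (?w * (\<bar>c\<bar> * nl u j + \<bar>e\<bar> * nl v j))\<^sup>2"
      by (intro power_mono) auto
    also have "\<dots> \<le> 2 * c\<^sup>2 * (?w * nl u j)\<^sup>2 + 2 * e\<^sup>2 * (?w * nl v j)\<^sup>2"
    proof -
      have "\<And>x y :: real. (x + y)\<^sup>2 \<le> 2 * x\<^sup>2 + 2 * y\<^sup>2" 
      proof -
        fix x y :: real
        have "0 \<le> (x - y)\<^sup>2" by simp
        then show "(x + y)\<^sup>2 \<le> 2 * x\<^sup>2 + 2 * y\<^sup>2" by (simp add: power2_eq_square algebra_simps)
      qed
      from this[of "?w * \<bar>c\<bar> * nl u j" "?w * \<bar>e\<bar> * nl v j"] show ?thesis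
        by (simp add: algebra_simps power_mult_distrib)
    qed
    finally show "norm ((?w * nl (\<lambda>j k. c * u j k + e * v j k) j)\<^sup>2) \<le> 2 * c\<^sup>2 * (?w * nl u j)\<^sup>2 + 2 * e\<^sup>2 * (?w * nl v j)\<^sup>2"
      by simp
  qed
qed

lemma onL_lin:
  "on_Lambda Lam u \<Longrightarrow> on_Lambda Lam v \<Longrightarrow> on_Lambda Lam (\<lambda>j k. c * u j k + e * v j k)"
  by (simp add: on_Lambda_def)

lemma A_lin:
  assumes "on_Lambda Lam u" "in_besov d Lam 2 2 (-a) u" "on_Lambda Lam v" "in_besov d Lam 2 2 (-a) v"
  shows "A (\<lambda>j k. c * u j k + e * v j k) = c *\<^sub>R A u + e *\<^sub>R A v"
proof -
  have 1: "in_besov d Lam 2 2 (-a) (\<lambda>j k. c * u j k)"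
    using Hm_lin[OF assms(2) assms(4), of c 0] by simp
  have 2: "in_besov d Lam 2 2 (-a) (\<lambda>j k. e * v j k)"
    using Hm_lin[OF assms(2) assms(4), of 0 e] by simp
  have o1: "on_Lambda Lam (\<lambda>j k. c * u j k)" "on_Lambda Lam (\<lambda>j k. e * v j k)"
    using assms by (auto simp: on_Lambda_def)
  have "A (\<lambda>j k. c * u j k + e * v j k) = A (\<lambda>j k. c * u j k) + A (\<lambda>j k. e * v j k)"
    using A_add[OF o1(1) 1 o1(2) 2] by simp
  also have "\<dots> = c *\<^sub>R A u + e *\<^sub>R A v"
    using A_scale assms by simp
  finally show ?thesis .
qed

lemma A_diff:
  assumes "on_Lambda Lam u" "in_besov d Lam 2 2 (-a) u" "on_Lambda Lam v" "in_besov d Lam 2 2 (-a) v"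
  shows "A (\<lambda>j k. u j k - v j k) = A u - A v"
  using A_lin[OF assms, of 1 "-1"] by simp


lemma small_t_lemma:
  fixes c N :: real
  assumes "N \<ge> 0" and h: "\<And>t. 0 < t \<Longrightarrow> t \<le> 1 \<Longrightarrow> 0 \<le> c + t * N"
  shows "0 \<le> c"
proof (rule ccontr)
  assume "\<not> 0 \<le> c"
  then have e: "-c > 0" by simp
  define t where "t = min 1 ((-c) / (2 * (N + 1)))"
  have "(-c) / (2 * (N + 1)) > 0" using e assms by (intro divide_pos_pos) auto
  then have tp: "0 < t" "t \<le> 1" by (auto simp: t_def)
  have "t * N \<le> ((-c) / (2 * (N + 1))) * N" using assms(1) by (intro mult_right_mono) (auto simp: t_def)
  also have "\<dots> = (-c) / 2 * (N / (N + 1))" by simp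
  also have "\<dots> \<le> (-c) / 2 * 1" using e assms by (intro mult_left_mono) auto
  finally have "c + t * N < 0" using e by linarith
  with h[OF tp] show False by linarith
qed

lemma key:
  fixes g :: 'y
  assumes alpha: "\<alpha> > 0" and xh: "xh \<in> R_alpha d Lam q A \<alpha> g"
    and zL: "on_Lambda Lam z" and zq: "summable (\<lambda>j. nl z j powr q)"
  shows "inner (g - A xh) (A z - A xh) \<le> \<alpha> * ((\<Sum>j. nl z j powr q) / q - (\<Sum>j. nl xh j powr q) / q)"
proof -
  have xhL: "on_Lambda Lam xh" and xhq: "summable (\<lambda>j. nl xh j powr q)"
    and mini: "\<And>z'. on_Lambda Lam z' \<Longrightarrow> in_besov d Lam 2 q 0 z' \<Longrightarrow>
                 tikhonov d Lam q A \<alpha> g xh \<le> tikhonov d Lam q A \<alpha> g z'"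
    using xh by (auto simp: R_alpha_def in_besovq)
  define w where "w = g - A xh"
  define D where "D = A z - A xh"
  define Pz where "Pz = (\<Sum>j. nl z j powr q) / q"
  define Px where "Px = (\<Sum>j. nl xh j powr q) / q"
  have Hz: "in_besov d Lam 2 2 (-a) z" using Hm_of_Dq[OF zq] .
  have Hx: "in_besov d Lam 2 2 (-a) xh" using Hm_of_Dq[OF xhq] .
  have step: "0 \<le> (2 * \<alpha> * (Pz - Px) - 2 * inner w D) + t * (norm D)\<^sup>2" if t: "0 < t" "t \<le> 1" for t
  proof -
    define zt where "zt = (\<lambda>j k. (1 - t) * xh j k + t * z j k)"
    have ztL: "on_Lambda Lam zt" unfolding zt_def using xhL zL by (rule onL_lin)
    have nlt: "nl zt j powr q \<le> (1 - t) * nl xh j powr q + t * nl z j powr q" for j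
    proof -
      have "nl zt j \<le> (1 - t) * nl xh j + t * nl z j"
        unfolding zt_def using nl_add[of "\<lambda>j k. (1 - t) * xh j k" "\<lambda>j k. t * z j k" j] t
        by (simp add: nl_scale)
      then have "nl zt j powr q \<le> ((1 - t) * nl xh j + t * nl z j) powr q"
        using q_gt by (intro powr_mono2) auto
      also have "\<dots> \<le> (1 - t) * nl xh j powr q + t * nl z j powr q"
        using q_gt t by (intro powr_convex0) auto
      finally show ?thesis .
    qed
    have sR: "summable (\<lambda>j. (1 - t) * nl xh j powr q + t * nl z j powr q)"
      using xhq zq by (intro summable_add summable_mult)
    have ztq: "summable (\<lambda>j. nl zt j powr q)"
      by (rule summable_comparison_test'[OF sR]) (use nlt in auto)
    have Pzt: "(\<Sum>j. nl zt j powr q) \<le> (1 - t) * (\<Sum>j. nl xh j powr q) + t * (\<Sum>j. nl z j powr q)"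
    proof -
      have "(\<Sum>j. nl zt j powr q) \<le> (\<Sum>j. (1 - t) * nl xh j powr q + t * nl z j powr q)"
        by (rule suminf_le[OF nlt ztq sR])
      also have "\<dots> = (1 - t) * (\<Sum>j. nl xh j powr q) + t * (\<Sum>j. nl z j powr q)"
        using xhq zq by (simp add: suminf_add[symmetric] suminf_mult summable_mult)
      finally show ?thesis .
    qed
    have Azt: "A zt = (1 - t) *\<^sub>R A xh + t *\<^sub>R A z"
      unfolding zt_def by (rule A_lin[OF xhL Hx zL Hz])
    have gzt: "g - A zt = w - t *\<^sub>R D"
      unfolding Azt w_def D_def by (simp add: algebra_simps)
    have nsq: "(norm (w - t *\<^sub>R D))\<^sup>2 = (norm w)\<^sup>2 - 2 * t * inner w D + t\<^sup>2 * (norm D)\<^sup>2"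
    proof -
      have "(norm (w - t *\<^sub>R D))\<^sup>2 = inner (w - t *\<^sub>R D) (w - t *\<^sub>R D)" by (rule power2_norm_eq_inner)
      also have "\<dots> = inner w w - 2 * t * inner w D + t\<^sup>2 * inner D D"
        by (simp add: inner_diff_left inner_diff_right inner_commute[of D w] algebra_simps power2_eq_square)
      finally show ?thesis by (simp only: dot_square_norm)
    qed
    have "tikhonov d Lam q A \<alpha> g xh \<le> tikhonov d Lam q A \<alpha> g zt"
      using mini[OF ztL] ztq by (simp add: in_besovq)
    then have "(norm w)\<^sup>2 / (2 * \<alpha>) + Px \<le> ((norm w)\<^sup>2 - 2 * t * inner w D + t\<^sup>2 * (norm D)\<^sup>2) / (2 * \<alpha>) + (\<Sum>j. nl zt j powr q) / q"
      unfolding tikhonov_def penalty_eq[OF xhq] penalty_eq[OF ztq] gzt nsq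
      by (simp add: w_def Px_def)
    also have "(\<Sum>j. nl zt j powr q) / q \<le> ((1 - t) * (\<Sum>j. nl xh j powr q) + t * (\<Sum>j. nl z j powr q)) / q"
      using Pzt q_gt by (intro divide_right_mono) auto
    finally have "(norm w)\<^sup>2 / (2 * \<alpha>) + Px \<le> ((norm w)\<^sup>2 - 2 * t * inner w D + t\<^sup>2 * (norm D)\<^sup>2) / (2 * \<alpha>) + ((1 - t) * Px + t * Pz)"
      by (simp add: Px_def Pz_def add_divide_distrib)
    then have "2 * \<alpha> * ((norm w)\<^sup>2 / (2 * \<alpha>) + Px) \<le> 2 * \<alpha> * (((norm w)\<^sup>2 - 2 * t * inner w D + t\<^sup>2 * (norm D)\<^sup>2) / (2 * \<alpha>) + ((1 - t) * Px + t * Pz))"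
      using alpha by (intro mult_left_mono) auto
    moreover have cancel: "\<And>Y Z. 2 * \<alpha> * (Y / (2 * \<alpha>) + Z) = Y + 2 * \<alpha> * Z"
      using alpha by (simp add: field_simps)
    ultimately have "(norm w)\<^sup>2 + 2 * \<alpha> * Px \<le> ((norm w)\<^sup>2 - 2 * t * inner w D + t\<^sup>2 * (norm D)\<^sup>2) + 2 * \<alpha> * ((1 - t) * Px + t * Pz)"
      by (simp only: cancel)
    then have "t * (2 * inner w D) \<le> t * (2 * \<alpha> * (Pz - Px) + t * (norm D)\<^sup>2)"
      by (simp add: algebra_simps power2_eq_square)
    then have "2 * inner w D \<le> 2 * \<alpha> * (Pz - Px) + t * (norm D)\<^sup>2"
      using t by simp
    then show ?thesis by simp
  qed
  have "0 \<le> 2 * \<alpha> * (Pz - Px) - 2 * inner w D"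
    by (rule small_t_lemma[OF _ step]) auto
  then have "inner w D \<le> \<alpha> * (Pz - Px)" by simp
  then show ?thesis by (simp add: w_def D_def Pz_def Px_def)
qed


lemma besov_neg_term:
  assumes "in_besov d Lam 2 2 (-a) z"
  shows "2 powr (real j * - a) * nl z j \<le> besov_norm d Lam 2 2 (-a) z"
proof -
  have "(2 powr (real j * - a) * nl z j)\<^sup>2 \<le> (\<Sum>j. (2 powr (real j * - a) * nl z j)\<^sup>2)"
    using assms unfolding in_besov2 by (intro term_le_suminf) auto
  then have "sqrt ((2 powr (real j * - a) * nl z j)\<^sup>2) \<le> sqrt (\<Sum>j. (2 powr (real j * - a) * nl z j)\<^sup>2)"
    by (rule real_sqrt_le_mono)
  then show ?thesis using norm_besov2[OF assms] by simp
qed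

lemma level_bound:
  fixes g :: 'y
  assumes alpha: "\<alpha> > 0" and xh: "xh \<in> R_alpha d Lam q A \<alpha> g"
  shows "\<alpha> * nl xh j powr q / q \<le> norm (g - A xh) * (M * (2 powr (real j * - a) * nl xh j))"
proof -
  have xhL: "on_Lambda Lam xh" and xhq: "summable (\<lambda>j. nl xh j powr q)"
    using xh by (auto simp: R_alpha_def in_besovq)
  define z where "z = (\<lambda>i k. if i = j then 0 else xh i k)"
  have zL: "on_Lambda Lam z" using xhL by (auto simp: z_def on_Lambda_def)
  have nlz: "nl z i = (if i = j then 0 else nl xh i)" for i by (simp add: nl_def z_def L2_set_def)
  have zeq: "(\<lambda>i. nl z i powr q) = (\<lambda>i. nl xh i powr q - (if i = j then nl xh j powr q else 0))"
    by (auto simp: nlz)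
  have ss: "(\<lambda>i. if i = j then nl xh j powr q else 0) sums (nl xh j powr q)"
    using sums_single[of j "\<lambda>_. nl xh j powr q"] by simp
  have zq: "summable (\<lambda>i. nl z i powr q)" unfolding zeq using xhq ss
    by (intro summable_diff) (auto simp: sums_iff)
  have sumz: "(\<Sum>i. nl z i powr q) = (\<Sum>i. nl xh i powr q) - nl xh j powr q"
    unfolding zeq using suminf_diff[OF xhq, of "\<lambda>i. if i = j then nl xh j powr q else 0"] ss
    by (simp add: sums_iff)
  have Hz: "in_besov d Lam 2 2 (-a) z" using Hm_of_Dq[OF zq] .
  have Hx: "in_besov d Lam 2 2 (-a) xh" using Hm_of_Dq[OF xhq] .
  define v where "v = (\<lambda>i k. z i k - xh i k)"
  have Av: "A v = A z - A xh" unfolding v_def by (rule A_diff[OF zL Hz xhL Hx])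
  have vL: "on_Lambda Lam v" using zL xhL by (auto simp: v_def on_Lambda_def)
  have Hv: "in_besov d Lam 2 2 (-a) v" unfolding v_def using Hm_lin[OF Hz Hx, of 1 "-1"] by simp
  have nlv: "nl v i = (if i = j then nl xh j else 0)" for i
    by (simp add: nl_def v_def z_def L2_set_def)
  have sv: "(\<lambda>i. (2 powr (real i * - a) * nl v i)\<^sup>2) = (\<lambda>i. if i = j then (2 powr (real j * - a) * nl xh j)\<^sup>2 else 0)"
    by (auto simp: nlv)
  have "besov_norm d Lam 2 2 (-a) v = sqrt ((2 powr (real j * - a) * nl xh j)\<^sup>2)"
    unfolding norm_besov2[OF Hv] sv using sums_single[of j "\<lambda>_. (2 powr (real j * - a) * nl xh j)\<^sup>2"]
    by (simp add: sums_iff)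
  then have bv: "besov_norm d Lam 2 2 (-a) v = 2 powr (real j * - a) * nl xh j" by simp
  have nAv: "norm (A v) \<le> M * (2 powr (real j * - a) * nl xh j)"
    using A_bounds[OF vL Hv] bv by simp
  have k: "inner (g - A xh) (A z - A xh) \<le> \<alpha> * ((\<Sum>j. nl z j powr q) / q - (\<Sum>j. nl xh j powr q) / q)"
    by (rule key[OF alpha xh zL zq])
  also have "\<dots> = - (\<alpha> * nl xh j powr q / q)" unfolding sumz using q_gt by (simp add: field_simps)
  finally have "\<alpha> * nl xh j powr q / q \<le> - inner (g - A xh) (A v)" unfolding Av by simp
  also have "\<dots> \<le> norm (g - A xh) * norm (A v)"
    using norm_cauchy_schwarz[of "g - A xh" "- A v"] by simp
  also have "\<dots> \<le> norm (g - A xh) * (M * (2 powr (real j * - a) * nl xh j))"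
    using nAv by (intro mult_left_mono) auto
  finally show ?thesis .
qed


lemma main:
  fixes s cl cr cD CD :: real
  assumes s_pos: "0 < s" and s_lt: "s < a / (q - 1)"
    and cl_pos: "0 < cl" and cl_cr: "cl \<le> cr" and cD_gt: "1 < cD" and cD_CD: "cD < CD"
  shows "\<exists>C > 0. \<forall>x \<delta> \<rho> (g::'y) \<alpha> xh.
           on_Lambda Lam x \<and> in_besov_inf d Lam 2 s x \<and> besov_norm_inf d Lam 2 s x \<le> \<rho> \<and>
           \<delta> > 0 \<and> \<rho> > 0 \<and> norm (g - A x) \<le> \<delta> \<and> \<alpha> > 0 \<and> xh \<in> R_alpha d Lam q A \<alpha> g \<and>
           ((cl * \<rho> powr (- (q * a / (s + a))) * \<delta> powr (((2 - q) * s + 2 * a) / (s + a)) \<le> \<alpha> \<and>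
             \<alpha> \<le> cr * \<rho> powr (- (q * a / (s + a))) * \<delta> powr (((2 - q) * s + 2 * a) / (s + a)))
            \<or> (cD * \<delta> \<le> norm (g - A xh) \<and> norm (g - A xh) \<le> CD * \<delta>))
           \<longrightarrow> in_besov d Lam 2 2 0 (\<lambda>j k. x j k - xh j k) \<and>
               besov_norm d Lam 2 2 0 (\<lambda>j k. x j k - xh j k) \<le> C * \<rho> powr (a / (s + a)) * \<delta> powr (s / (s + a))"
proof -
  define \<beta> where "\<beta> = a - s * (q - 1)"
  have bp: "\<beta> > 0" using s_lt q_gt by (simp add: \<beta>_def field_simps)
  define k1 where "k1 = M * 2 powr \<beta> / (2 powr \<beta> - 1)"
  define k2 where "k2 = 1 / (q * (1 - 2 powr (- (s * q))))"
  define cE where "cE = max (2 + cr * k1 + cr * k2) (1 + CD)"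
  define k0 where "k0 = min cl (cD * (cD - 1) / (k1 * (1 + CD) + k2))"
  define K1 where "K1 = (q * M * (1 + cE) / k0) powr (1 / (q - 1))"
  define C0 where "C0 = M\<^sup>2 * cE\<^sup>2 * 2 powr (2 * a) / (2 powr (2 * a) - 1) + 2 / (1 - 2 powr (- (2 * s)))
             + 2 * K1\<^sup>2 / (1 - 2 powr (- (2 * (a / (q - 1)))))"
  have sqp: "s * q > 0" using s_pos q_gt by simp
  have k1: "k1 \<ge> 0"
  proof -
    have "2 powr \<beta> > (1::real)" using bp by simp
    then show ?thesis using M_ge by (simp add: k1_def)
  qed
  have k2: "k2 > 0" using one_minus_pos[OF sqp] q_gt by (simp add: k2_def)
  have den: "k1 * (1 + CD) + k2 > 0"
  proof -
    have "k1 * (1 + CD) \<ge> 0" using k1 cD_gt cD_CD by simp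
    then show ?thesis using k2 by linarith
  qed
  have k0: "k0 > 0" using cl_pos cD_gt den by (simp add: k0_def)
  have cE0: "cE \<ge> 0" using cD_gt cD_CD by (simp add: cE_def le_max_iff_disj)
  have K10: "K1 \<ge> 0" by (simp add: K1_def)
  have M0: "M \<ge> 0" using M_ge by simp
  show ?thesis
  proof (intro exI[of _ "sqrt C0 + 1"] conjI allI impI)
    have C00: "C0 \<ge> 0"
    proof -
      have p1: "2 powr (2 * a) > (1::real)" using a_pos by simp
      have p2: "1 - 2 powr (- (2 * s)) > (0::real)" using one_minus_pos[of "2 * s"] s_pos by simp
      have p3: "1 - 2 powr (- (2 * (a / (q - 1)))) > (0::real)" using one_minus_pos[of "2 * (a / (q - 1))"] a_pos q_gt by simp
      show ?thesis unfolding C0_def using p1 p2 p3 by (intro add_nonneg_nonneg divide_nonneg_pos mult_nonneg_nonneg) auto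
    qed
    show "sqrt C0 + 1 > 0" using real_sqrt_ge_zero[OF C00] by linarith
    fix x \<delta> \<rho> \<alpha> xh and g :: 'y
    assume hyp: "on_Lambda Lam x \<and> in_besov_inf d Lam 2 s x \<and> besov_norm_inf d Lam 2 s x \<le> \<rho> \<and>
           \<delta> > 0 \<and> \<rho> > 0 \<and> norm (g - A x) \<le> \<delta> \<and> \<alpha> > 0 \<and> xh \<in> R_alpha d Lam q A \<alpha> g \<and>
           ((cl * \<rho> powr (- (q * a / (s + a))) * \<delta> powr (((2 - q) * s + 2 * a) / (s + a)) \<le> \<alpha> \<and>
             \<alpha> \<le> cr * \<rho> powr (- (q * a / (s + a))) * \<delta> powr (((2 - q) * s + 2 * a) / (s + a)))
            \<or> (cD * \<delta> \<le> norm (g - A xh) \<and> norm (g - A xh) \<le> CD * \<delta>))"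
    then have xL: "on_Lambda Lam x" and xinf: "in_besov_inf d Lam 2 s x"
      and xn: "besov_norm_inf d Lam 2 s x \<le> \<rho>" and dp: "\<delta> > 0" and rp: "\<rho> > 0"
      and noise: "norm (g - A x) \<le> \<delta>" and alpha: "\<alpha> > 0" and xh: "xh \<in> R_alpha d Lam q A \<alpha> g"
      and cases: "(cl * \<rho> powr (- (q * a / (s + a))) * \<delta> powr (((2 - q) * s + 2 * a) / (s + a)) \<le> \<alpha> \<and>
             \<alpha> \<le> cr * \<rho> powr (- (q * a / (s + a))) * \<delta> powr (((2 - q) * s + 2 * a) / (s + a)))
            \<or> (cD * \<delta> \<le> norm (g - A xh) \<and> norm (g - A xh) \<le> CD * \<delta>)"
      by auto
    have xhL: "on_Lambda Lam xh" and xhq: "summable (\<lambda>j. nl xh j powr q)"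
      using xh by (auto simp: R_alpha_def in_besovq)
    have hX: "0 \<le> nl x j \<and> nl x j \<le> \<rho> * 2 powr (- (real j * s))" for j
    proof -
      have "besov_level d Lam 2 s x j \<le> besov_norm_inf d Lam 2 s x"
        using xinf unfolding in_besov_inf_def besov_norm_inf_def by (intro cSUP_upper) auto
      then have "2 powr (real j * s) * nl x j \<le> \<rho>" using xn by (simp add: level_eq)
      then have "nl x j \<le> \<rho> / 2 powr (real j * s)" by (simp add: field_simps mult.commute)
      then show ?thesis by (simp add: powr_minus divide_inverse)
    qed
    have xq: "summable (\<lambda>j. nl x j powr q)"
    proof (rule summable_comparison_test'[OF geo_tail(1)[OF sqp, of "\<rho> powr q"]])
      fix j :: nat
      have "nl x j powr q \<le> (\<rho> * 2 powr (- (real j * s))) powr q" using hX[of j] q_gt by (intro powr_mono2) auto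
      also have "\<dots> = \<rho> powr q * 2 powr (- (real j * (s * q)))" using rp by (simp add: powr_mult powr_powr mult.assoc)
      finally show "norm (nl x j powr q) \<le> \<rho> powr q * 2 powr (- (real j * (s * q)))" by simp
    qed
    have Hx: "in_besov d Lam 2 2 (-a) x" using Hm_of_Dq[OF xq] .
    have Hxh: "in_besov d Lam 2 2 (-a) xh" using Hm_of_Dq[OF xhq] .
    define e where "e = (\<lambda>j k. x j k - xh j k)"
    have eL: "on_Lambda Lam e" using xL xhL by (auto simp: e_def on_Lambda_def)
    have He: "in_besov d Lam 2 2 (-a) e" unfolding e_def using Hm_lin[OF Hx Hxh, of 1 "-1"] by simp
    have Ae: "A e = A x - A xh" unfolding e_def by (rule A_diff[OF xL Hx xhL Hxh])
    define E where "E = norm (A x - A xh)"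
    define r where "r = norm (g - A xh)"
    define I where "I = inner (g - A xh) (A x - A xh)"
    have hE: "2 powr (real j * - a) * nl e j \<le> M * E" for j
    proof -
      have "(1 / M) * besov_norm d Lam 2 2 (-a) e \<le> norm (A e)" using A_bounds[OF eL He] by simp
      then have "besov_norm d Lam 2 2 (-a) e \<le> M * E" using M_ge by (simp add: Ae E_def field_simps)
      then show ?thesis using besov_neg_term[OF He, of j] by simp
    qed
    have hI1: "E\<^sup>2 - \<delta> * E \<le> I"
    proof -
      have "I = inner (g - A x) (A x - A xh) + inner (A x - A xh) (A x - A xh)"
        unfolding I_def by (simp add: inner_diff_left inner_diff_right algebra_simps)
      moreover have "inner (g - A x) (A x - A xh) \<ge> - (\<delta> * E)"
      proof -
        have "\<bar>inner (g - A x) (A x - A xh)\<bar> \<le> norm (g - A x) * E" unfolding E_def by (rule Cauchy_Schwarz_ineq2)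
        also have "\<dots> \<le> \<delta> * E" using noise by (intro mult_right_mono) (auto simp: E_def)
        finally show ?thesis by linarith
      qed
      moreover have "inner (A x - A xh) (A x - A xh) = E\<^sup>2" unfolding E_def by (simp add: dot_square_norm)
      ultimately show ?thesis by linarith
    qed
    have hI2: "r\<^sup>2 - r * \<delta> \<le> I"
    proof -
      have "I = inner (g - A xh) (g - A xh) - inner (g - A xh) (g - A x)"
        unfolding I_def by (simp add: inner_diff_left inner_diff_right algebra_simps)
      moreover have "inner (g - A xh) (g - A x) \<le> r * \<delta>"
      proof -
        have "inner (g - A xh) (g - A x) \<le> r * norm (g - A x)" unfolding r_def by (rule norm_cauchy_schwarz)
        also have "\<dots> \<le> r * \<delta>" using noise by (intro mult_left_mono) (auto simp: r_def)
        finally show ?thesis .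
      qed
      moreover have "inner (g - A xh) (g - A xh) = r\<^sup>2" unfolding r_def by (simp add: dot_square_norm)
      ultimately show ?thesis by linarith
    qed
    have hEr: "E \<le> \<delta> + r"
    proof -
      have "A x - A xh = (g - A xh) - (g - A x)" by simp
      then have "E \<le> r + norm (g - A x)" unfolding E_def r_def by (metis norm_triangle_ineq4)
      then show ?thesis using noise by linarith
    qed
    have hrE: "r \<le> \<delta> + E"
    proof -
      have "g - A xh = (g - A x) + (A x - A xh)" by simp
      then have "r \<le> norm (g - A x) + E" unfolding E_def r_def by (metis norm_triangle_ineq)
      then show ?thesis using noise by linarith
    qed
    have keyx: "I \<le> \<alpha> * ((\<Sum>j. nl x j powr q) / q - (\<Sum>j. nl xh j powr q) / q)"
      unfolding I_def by (rule key[OF alpha xh xL xq])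
    define \<tau> where "\<tau> = (\<rho> / \<delta>) powr (1 / (s + a))"
    have tp: "\<tau> > 0" using rp dp by (simp add: \<tau>_def)
    have sa: "s + a > 0" using s_pos a_pos by simp
    have rho: "\<rho> = \<delta> * \<tau> powr (s + a)"
      using rp dp sa by (simp add: \<tau>_def powr_powr)
    obtain J :: nat where tJ: "\<tau> \<le> 2 powr real J" and tJ2: "J > 0 \<longrightarrow> 2 powr real J \<le> 2 * \<tau>"
      using choose_J[OF tp] by blast
    define \<Phi> where "\<Phi> = \<delta> powr (q - 1) * \<tau> powr (q * a)"
    have Sb: "(\<Sum>j. nl x j powr q) / q - (\<Sum>j. nl xh j powr q) / q \<le> \<Phi> * (k1 * E + k2 * \<delta>)"
      unfolding \<Phi>_def k1_def k2_def \<beta>_def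
      by (rule S_bound[OF q_gt s_pos bp[unfolded \<beta>_def] dp tp rho tJ tJ2 hX nl_nonneg _ hE xq xhq])
         (simp add: e_def nl_diff_ge)
    have hIS: "I \<le> (\<alpha> * \<Phi>) * (k1 * E + k2 * \<delta>)"
    proof -
      have "\<alpha> * ((\<Sum>j. nl x j powr q) / q - (\<Sum>j. nl xh j powr q) / q) \<le> \<alpha> * (\<Phi> * (k1 * E + k2 * \<delta>))"
        using Sb alpha by (intro mult_left_mono) auto
      then show ?thesis using keyx by (simp add: mult.assoc)
    qed
    have Zid: "\<rho> powr (- (q * a / (s + a))) * \<delta> powr (((2 - q) * s + 2 * a) / (s + a)) * \<Phi> = \<delta>"
    proof -
      have "\<rho> powr (- (q * a / (s + a))) = \<delta> powr (- (q * a / (s + a))) * \<tau> powr ((s + a) * - (q * a / (s + a)))"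
        unfolding rho using dp tp by (rule pm)
      also have "(s + a) * - (q * a / (s + a)) = - (q * a)" using sa by simp
      finally have r1: "\<rho> powr (- (q * a / (s + a))) = \<delta> powr (- (q * a / (s + a))) * \<tau> powr (- (q * a))" .
      have "\<rho> powr (- (q * a / (s + a))) * \<delta> powr (((2 - q) * s + 2 * a) / (s + a)) * \<Phi>
          = (\<delta> powr (- (q * a / (s + a))) * \<delta> powr (((2 - q) * s + 2 * a) / (s + a)) * \<delta> powr (q - 1))
            * (\<tau> powr (- (q * a)) * \<tau> powr (q * a))"
        unfolding r1 \<Phi>_def by (simp add: mult_ac)
      also have "\<tau> powr (- (q * a)) * \<tau> powr (q * a) = 1" using tp by (simp add: powr_minus)
      also have "\<delta> powr (- (q * a / (s + a))) * \<delta> powr (((2 - q) * s + 2 * a) / (s + a)) * \<delta> powr (q - 1)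
          = \<delta> powr (- (q * a / (s + a)) + ((2 - q) * s + 2 * a) / (s + a) + (q - 1))"
        by (simp only: powr_add)
      also have "- (q * a / (s + a)) + ((2 - q) * s + 2 * a) / (s + a) + (q - 1) = 1"
      proof -
        have "- (q * a / (s + a)) + ((2 - q) * s + 2 * a) / (s + a) = (- (q * a) + ((2 - q) * s + 2 * a)) / (s + a)"
          by (simp add: add_divide_distrib diff_divide_distrib)
        also have "- (q * a) + ((2 - q) * s + 2 * a) = (2 - q) * (s + a)" by (simp add: algebra_simps)
        also have "(2 - q) * (s + a) / (s + a) = 2 - q" using sa by simp
        finally show ?thesis by simp
      qed
      finally show ?thesis using dp by simp
    qed
    have Phip: "\<Phi> > 0" using dp tp by (simp add: \<Phi>_def)
    have cases': "(cl * \<delta> \<le> \<alpha> * \<Phi> \<and> \<alpha> * \<Phi> \<le> cr * \<delta>) \<or> (cD * \<delta> \<le> r \<and> r \<le> CD * \<delta>)"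
    proof (cases "cD * \<delta> \<le> r \<and> r \<le> CD * \<delta>")
      case True then show ?thesis by simp
    next
      case False
      let ?Z = "\<rho> powr (- (q * a / (s + a))) * \<delta> powr (((2 - q) * s + 2 * a) / (s + a))"
      have c: "cl * ?Z \<le> \<alpha> \<and> \<alpha> \<le> cr * ?Z" using cases False by (auto simp: r_def mult.assoc)
      then have "cl * ?Z * \<Phi> \<le> \<alpha> * \<Phi>" "\<alpha> * \<Phi> \<le> cr * ?Z * \<Phi>" using Phip by (auto intro: mult_right_mono)
      then show ?thesis using Zid by (simp add: mult.assoc)
    qed
    have CA: "E \<le> cE * \<delta> \<and> r \<le> (1 + cE) * \<delta> \<and> k0 * \<delta> \<le> \<alpha> * \<Phi>"
      unfolding cE_def k0_def
      by (rule case_analysis[OF dp _ _ k1 k2 hI1 hI2 hIS hEr hrE cases' cl_pos cl_cr cD_gt cD_CD])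
         (auto simp: E_def r_def)
    have hH: "0 \<le> nl xh j \<and> nl xh j \<le> K1 * \<delta> * \<tau> powr (q * a / (q - 1)) * 2 powr (- (real j * (a / (q - 1))))" for j
    proof -
      have "nl xh j \<le> K1 * \<delta> * \<tau> powr (q * a / (q - 1)) * 2 powr (- (real j * (a / (q - 1))))"
        unfolding K1_def
        by (rule H_bound[OF alpha nl_nonneg q_gt M0 dp tp k0 _ level_bound[OF alpha xh, of j] _ _ \<Phi>_def])
           (use CA cE0 in \<open>auto simp: r_def\<close>)
      then show ?thesis by simp
    qed
    have hXH: "0 \<le> nl e j \<and> nl e j \<le> nl x j + nl xh j" for j
      by (simp add: e_def nl_diff)
    have EB: "summable (\<lambda>j. (nl e j)\<^sup>2) \<and> (\<Sum>j. (nl e j)\<^sup>2) \<le> C0 * (\<delta> * \<tau> powr a)\<^sup>2"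
      unfolding C0_def
      by (rule E_bound[OF q_gt s_pos a_pos dp tp rho tJ tJ2 hX hH hXH hE _ M0 K10]) (use CA in auto)
    have inb: "in_besov d Lam 2 2 0 e" unfolding in_besov2 using EB by simp
    have "besov_norm d Lam 2 2 0 e = sqrt (\<Sum>j. (nl e j)\<^sup>2)" using norm_besov2[OF inb] by simp
    also have "\<dots> \<le> sqrt (C0 * (\<delta> * \<tau> powr a)\<^sup>2)" using EB by (intro real_sqrt_le_mono) auto
    also have "\<dots> = sqrt C0 * (\<delta> * \<tau> powr a)" using dp tp by (simp add: real_sqrt_mult)
    also have "\<dots> \<le> (sqrt C0 + 1) * (\<delta> * \<tau> powr a)" using dp tp by (intro mult_right_mono) auto
    also have "\<delta> * \<tau> powr a = \<rho> powr (a / (s + a)) * \<delta> powr (s / (s + a))"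
    proof -
      have "\<rho> powr (a / (s + a)) = \<delta> powr (a / (s + a)) * \<tau> powr ((s + a) * (a / (s + a)))"
        unfolding rho using dp tp by (rule pm)
      also have "(s + a) * (a / (s + a)) = a" using sa by simp
      finally have "\<rho> powr (a / (s + a)) * \<delta> powr (s / (s + a)) = \<delta> powr (a / (s + a) + s / (s + a)) * \<tau> powr a"
        by (simp add: powr_add mult_ac)
      also have "a / (s + a) + s / (s + a) = 1" using sa by (simp add: add_divide_distrib[symmetric])
      finally show ?thesis using dp by simp
    qed
    finally show "besov_norm d Lam 2 2 0 (\<lambda>j k. x j k - xh j k) \<le> (sqrt C0 + 1) * \<rho> powr (a / (s + a)) * \<delta> powr (s / (s + a))"
      by (simp add: e_def mult.assoc)
    show "in_besov d Lam 2 2 0 (\<lambda>j k. x j k - xh j k)" using inb by (simp add: e_def)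
  qed
qed

end

theorem corollary2p10:
  fixes d :: nat and Lam :: "nat \<Rightarrow> 'k set" and C\<^sub>\<Lambda> :: real
    and A :: "(nat \<Rightarrow> 'k \<Rightarrow> real) \<Rightarrow> 'y::{real_inner, complete_space}"
    and M a q s c\<^sub>l c\<^sub>r c\<^sub>D C\<^sub>D :: real
  assumes d_pos: "d \<ge> 1"
    and Lam_fin: "\<And>j. finite (Lam j)"
    and Lam_card: "\<And>j. 2 ^ (j * d) \<le> real (card (Lam j)) \<and> real (card (Lam j)) \<le> C\<^sub>\<Lambda> * 2 ^ (j * d)"
    and a_pos: "a > 0"
    and A_add: "\<And>x y. on_Lambda Lam x \<Longrightarrow> in_besov d Lam 2 2 (-a) x \<Longrightarrow>
                        on_Lambda Lam y \<Longrightarrow> in_besov d Lam 2 2 (-a) y \<Longrightarrow> A (\<lambda>j k. x j k + y j k) = A x + A y"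
    and A_scale: "\<And>c x. on_Lambda Lam x \<Longrightarrow> in_besov d Lam 2 2 (-a) x \<Longrightarrow> A (\<lambda>j k. c * x j k) = c *\<^sub>R A x"
    and M_ge: "M \<ge> 1"
    and A_bounds: "\<And>x. on_Lambda Lam x \<Longrightarrow> in_besov d Lam 2 2 (-a) x \<Longrightarrow>
                   (1 / M) * besov_norm d Lam 2 2 (-a) x \<le> norm (A x) \<and>
                   norm (A x) \<le> M * besov_norm d Lam 2 2 (-a) x"
    and q_gt: "q > 1"
    and s_pos: "0 < s" and s_lt: "s < a / (q - 1)"
    and cl_pos: "0 < c\<^sub>l" and cl_cr: "c\<^sub>l \<le> c\<^sub>r"
    and cD_gt: "1 < c\<^sub>D" and cD_CD: "c\<^sub>D < C\<^sub>D"
  shows "\<exists>C > 0. \<forall>x \<delta> \<rho> (g::'y) \<alpha> xh.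
           on_Lambda Lam x \<and> in_besov_inf d Lam 2 s x \<and> besov_norm_inf d Lam 2 s x \<le> \<rho> \<and>
           \<delta> > 0 \<and> \<rho> > 0 \<and> norm (g - A x) \<le> \<delta> \<and> \<alpha> > 0 \<and> xh \<in> R_alpha d Lam q A \<alpha> g \<and>
           ((c\<^sub>l * \<rho> powr (- (q * a / (s + a))) * \<delta> powr (((2 - q) * s + 2 * a) / (s + a)) \<le> \<alpha> \<and>
             \<alpha> \<le> c\<^sub>r * \<rho> powr (- (q * a / (s + a))) * \<delta> powr (((2 - q) * s + 2 * a) / (s + a)))
            \<or> (c\<^sub>D * \<delta> \<le> norm (g - A xh) \<and> norm (g - A xh) \<le> C\<^sub>D * \<delta>))
           \<longrightarrow> in_besov d Lam 2 2 0 (\<lambda>j k. x j k - xh j k) \<and>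
               besov_norm d Lam 2 2 0 (\<lambda>j k. x j k - xh j k) \<le> C * \<rho> powr (a / (s + a)) * \<delta> powr (s / (s + a))"
proof -
  interpret bsetup d Lam A M a q
    by (unfold_locales) (use a_pos q_gt M_ge A_add A_scale A_bounds in auto)
  show ?thesis by (rule main[OF s_pos s_lt cl_pos cl_cr cD_gt cD_CD])
qed

end
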